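(* Suppose $P(z)$ is invertible at some $z \in \mathbb{C}$ and consider $X, Y, W \in \mathbb{C}^{nd}$ block partitioned as $X=[X_0;\ldots;X_{d-1}]$ etc. with blocks in $\mathbb{C}^n$. Then: (1) The block components of $X = (z\mathcal{B} - \mathcal{A})^{-1} Y$ are given by $X_0 = P(z)^{-1}\left(- Y_{d-1} - A_d Y_{d-1} + \sum_{i=1}^d A_i \sum_{j=0}^{i-1} z^{i-1-j} Y_j\right)$, and $X_i = z X_{i-1} - Y_{i-1}$ for $i=1, 2, \ldots, d-1$. (2) The block components of $\tilde{X} = (z\mathcal{B} - \mathcal{A})^{-*} W$ are given by $\tilde{X}_{d-1} = -P(z)^{-*} \sum_{j=0}^{d-1} \bar{z}^j W_j$, $\tilde{X}_{d-2} = -W_{d-1} - \bar z A_d^* \tilde{X}_{d-1} - A_{d-1}^*\tilde{X}_{d-1}$, and $\tilde{X}_{i} = -W_{i+1} + \bar z \tilde{X}_{i+1} - A_{i+1}^* \tilde{X}_{d-1}$ for $i=0, 1, \ldots, d-3$.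
   Context: Let $A_0, \ldots, A_d \in \mathbb{C}^{n\times n}$ with $A_d\neq 0$, and $P(z) = \sum_{j=0}^d z^j A_j$. The first companion linearization is the pencil $\mathcal{A} - z\mathcal{B}\in\mathbb{C}^{nd\times nd}$, written in $d\times d$ blocks of size $n\times n$: $\mathcal{A}$ has identity blocks $I$ on the first block superdiagonal in its first $d-1$ block rows, zeros elsewhere in those rows, and last block row $[A_0, A_1, \ldots, A_{d-1}]$; $\mathcal{B} = \mathrm{diag}(I, \ldots, I, -A_d)$. $M^{-*}$ denotes $(M^* )^{-1}$ and $^*$ is conjugate transpose. *)

theory Defs
  imports "Jordan_Normal_Form.Gauss_Jordan_Elimination"
begin

definition ctrans :: "complex mat \<Rightarrow> complex mat" where
  "ctrans M = mat (dim_col M) (dim_row M) (\<lambda>(i,j). cnj (M $$ (j,i)))"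

definition minv :: "complex mat \<Rightarrow> complex mat" where
  "minv M = the (mat_inverse M)"

definition matpoly :: "nat \<Rightarrow> nat \<Rightarrow> (nat \<Rightarrow> complex mat) \<Rightarrow> complex \<Rightarrow> complex mat" where
  "matpoly n d A z = mat n n (\<lambda>(r,c). \<Sum>j=0..d. z ^ j * (A j $$ (r,c)))"

text \<open>First companion linearization: the matrix cal A (nd x nd, d x d blocks of size n).\<close>
definition compA :: "nat \<Rightarrow> nat \<Rightarrow> (nat \<Rightarrow> complex mat) \<Rightarrow> complex mat" where
  "compA n d A = mat (n*d) (n*d) (\<lambda>(r,c).
     if r div n < d - 1
     then (if c div n = r div n + 1 \<and> r mod n = c mod n then 1 else 0)
     else A (c div n) $$ (r mod n, c mod n))"

definition compB :: "nat \<Rightarrow> nat \<Rightarrow> (nat \<Rightarrow> complex mat) \<Rightarrow> complex mat" where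
  "compB n d A = mat (n*d) (n*d) (\<lambda>(r,c).
     if r div n = c div n
     then (if r div n < d - 1 then (if r mod n = c mod n then 1 else 0)
           else - (A d $$ (r mod n, c mod n)))
     else 0)"

definition blk :: "nat \<Rightarrow> complex vec \<Rightarrow> nat \<Rightarrow> complex vec" where
  "blk n v i = vec n (\<lambda>k. v $ (i*n + k))"

end

theory Submission
  imports Defs "Jordan_Normal_Form.Determinant"
begin



lemma ctrans_carrier: "M \<in> carrier_mat a b \<Longrightarrow> ctrans M \<in> carrier_mat b a"
  unfolding ctrans_def by simp

lemma ctrans_index: "i < dim_col M \<Longrightarrow> j < dim_row M \<Longrightarrow> ctrans M $$ (i,j) = cnj (M $$ (j,i))"
  unfolding ctrans_def by simp

lemma ctrans_dims[simp]: "dim_row (ctrans M) = dim_col M" "dim_col (ctrans M) = dim_row M"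
  unfolding ctrans_def by simp_all

lemma ctrans_mult: assumes "A \<in> carrier_mat a b" "B \<in> carrier_mat b c"
  shows "ctrans (A * B) = ctrans B * ctrans A"
  using assms by (intro eq_matI) (auto simp: ctrans_index scalar_prod_def row_def col_def
     ctrans_def intro!: sum.cong)

lemma ctrans_one: "ctrans (1\<^sub>m N) = (1\<^sub>m N :: complex mat)"
  by (intro eq_matI) (auto simp: ctrans_index)

lemma units_I: assumes "M \<in> carrier_mat N N" "B \<in> carrier_mat N N" "M * B = 1\<^sub>m N" "B * M = 1\<^sub>m N"
  shows "M \<in> Units (ring_mat TYPE(complex) N ())"
  using assms unfolding Units_def ring_mat_def by auto

lemma minv_facts: assumes M: "M \<in> carrier_mat N N" and U: "M \<in> Units (ring_mat TYPE(complex) N ())"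
  shows "M * minv M = 1\<^sub>m N" "minv M * M = 1\<^sub>m N" "minv M \<in> carrier_mat N N"
proof -
  obtain B where B: "mat_inverse M = Some B"
    using mat_inverse(1)[OF M, of "()"] U by (cases "mat_inverse M") auto
  then show "M * minv M = 1\<^sub>m N" "minv M * M = 1\<^sub>m N" "minv M \<in> carrier_mat N N"
    using mat_inverse(2)[OF M B] unfolding minv_def by auto
qed

lemma ctrans_units: assumes M: "M \<in> carrier_mat N N" and U: "M \<in> Units (ring_mat TYPE(complex) N ())"
  shows "ctrans M \<in> Units (ring_mat TYPE(complex) N ())"
proof -
  note f = minv_facts[OF M U]
  show ?thesis
  proof (rule units_I[OF ctrans_carrier[OF M] ctrans_carrier[OF f(3)]])
    show "ctrans M * ctrans (minv M) = 1\<^sub>m N"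
      using ctrans_mult[OF f(3) M, symmetric] f(2) ctrans_one by simp
    show "ctrans (minv M) * ctrans M = 1\<^sub>m N"
      using ctrans_mult[OF M f(3), symmetric] f(1) ctrans_one by simp
  qed
qed

lemma invertible_units: assumes M: "M \<in> carrier_mat N N" and I: "invertible_mat M"
  shows "M \<in> Units (ring_mat TYPE(complex) N ())"
proof -
  obtain B where MB: "M * B = 1\<^sub>m (dim_row M)" and BM: "B * M = 1\<^sub>m (dim_row B)"
    using I unfolding invertible_mat_def inverts_mat_def by auto
  have "dim_col B = N" using arg_cong[OF MB, of dim_col] M by simp
  moreover have "dim_row B = N" using arg_cong[OF BM, of dim_col] M by simp
  ultimately have B: "B \<in> carrier_mat N N" by auto
  show ?thesis using units_I[OF M B] MB BM M B by auto
qed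

lemma inj_units: assumes M: "M \<in> carrier_mat N N"
  and inj: "\<And>v. v \<in> carrier_vec N \<Longrightarrow> M *\<^sub>v v = 0\<^sub>v N \<Longrightarrow> v = 0\<^sub>v N"
  shows "M \<in> Units (ring_mat TYPE(complex) N ())"
proof -
  have "det M \<noteq> 0" using det_0_iff_vec_prod_zero_field[OF M] inj by auto
  then show ?thesis by (rule det_non_zero_imp_unit[OF M])
qed

lemma solve_eq: assumes M: "M \<in> carrier_mat N N" and U: "M \<in> Units (ring_mat TYPE(complex) N ())"
  and Y: "Y \<in> carrier_vec N"
  shows "M *\<^sub>v (minv M *\<^sub>v Y) = Y" "minv M *\<^sub>v Y \<in> carrier_vec N"
proof -
  note f = minv_facts[OF M U]
  have "M *\<^sub>v (minv M *\<^sub>v Y) = (M * minv M) *\<^sub>v Y" by (rule assoc_mult_mat_vec[OF M f(3) Y, symmetric])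
  then show "M *\<^sub>v (minv M *\<^sub>v Y) = Y" using f Y by simp
  show "minv M *\<^sub>v Y \<in> carrier_vec N" using f Y by simp
qed

lemma solve_uniq: assumes M: "M \<in> carrier_mat N N" and U: "M \<in> Units (ring_mat TYPE(complex) N ())"
  and X: "X \<in> carrier_vec N" and eq: "M *\<^sub>v X = Y"
  shows "X = minv M *\<^sub>v Y"
proof -
  have "minv M *\<^sub>v Y = (minv M * M) *\<^sub>v X" using assoc_mult_mat_vec[OF minv_facts(3)[OF M U] M X] eq by simp
  also have "\<dots> = X" using minv_facts[OF M U] X by simp
  finally show ?thesis by simp
qed

lemma mult_mat_vec_neg: fixes M :: "complex mat" assumes "M \<in> carrier_mat a b" "v \<in> carrier_vec b"
  shows "M *\<^sub>v (- v) = - (M *\<^sub>v v)"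
proof -
  have dv: "dim_vec v = b" using assms(2) by auto
  have "(\<Sum>ia = 0..<b. M $$ (i, ia) * (- v) $ ia) = (\<Sum>ia = 0..<b. - (M $$ (i, ia) * v $ ia))" for i
    by (intro sum.cong refl) (simp add: dv)
  then show ?thesis using assms by (intro eq_vecI) (auto simp: mult_mat_vec_def scalar_prod_def sum_negf)
qed



lemma block_sum: fixes n d :: nat shows "(\<Sum>c\<in>{0..<n*d}. f c) = (\<Sum>j<d. \<Sum>m<n. f (j*n+m))"
proof (induction d)
  case 0 then show ?case by simp
next
  case (Suc d)
  have "{0..<n*Suc d} = {0..<n*d} \<union> {n*d..<n*d+n}" by auto
  then have "(\<Sum>c\<in>{0..<n*Suc d}. f c) = (\<Sum>c\<in>{0..<n*d}. f c) + (\<Sum>c\<in>{n*d..<n*d+n}. f c)"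
    by (simp add: sum.union_disjoint ivl_disj_int)
  also have "(\<Sum>c\<in>{n*d..<n*d+n}. f c) = (\<Sum>m<n. f (d*n+m))"
    by (simp add: sum.shift_bounds_nat_ivl[symmetric] lessThan_atLeast0 mult.commute add.commute)
  finally show ?case using Suc by simp
qed

lemma idx_bound: fixes i k n d :: nat assumes "i < d" "k < n" shows "i*n+k < n*d"
proof -
  have "i*n+k < i*n+n" using assms by simp
  also have "\<dots> = Suc i * n" by simp
  also have "\<dots> \<le> d * n" using assms by (intro mult_le_mono1) simp
  finally show ?thesis by (simp add: mult.commute)
qed

lemma idx_div[simp]: fixes k n :: nat assumes "k < n" shows "(i*n+k) div n = i" "(i*n+k) mod n = k"
  using assms by auto

lemma compA_blk:
  assumes "i < d" "j < d" "k < n" "m < n"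
  shows "compA n d A $$ (i*n+k, j*n+m) = (if i < d-1 then (if j = i+1 \<and> k = m then 1 else 0) else A j $$ (k,m))"
  using assms idx_bound[of i d k n] idx_bound[of j d m n] unfolding compA_def by simp

lemma compB_blk:
  assumes "i < d" "j < d" "k < n" "m < n"
  shows "compB n d A $$ (i*n+k, j*n+m) = (if i = j then (if i < d-1 then (if k = m then 1 else 0) else - A d $$ (k,m)) else 0)"
  using assms idx_bound[of i d k n] idx_bound[of j d m n] unfolding compB_def by simp

lemma L_blk:
  assumes "i < d" "j < d" "k < n" "m < n"
  shows "(z \<cdot>\<^sub>m compB n d A - compA n d A) $$ (i*n+k, j*n+m) = z * compB n d A $$ (i*n+k, j*n+m) - compA n d A $$ (i*n+k, j*n+m)"
  using assms idx_bound[of i d k n] idx_bound[of j d m n] unfolding compB_def compA_def by simp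

lemma mulv_blk:
  assumes "M \<in> carrier_mat (n*d) (n*d)" "X \<in> carrier_vec (n*d)" "i < d" "k < n"
  shows "(M *\<^sub>v X) $ (i*n+k) = (\<Sum>j<d. \<Sum>m<n. M $$ (i*n+k, j*n+m) * X $ (j*n+m))"
  using assms idx_bound[of i d k n]
  by (simp add: mult_mat_vec_def scalar_prod_def block_sum[of "\<lambda>c. M $$ (i*n+k, c) * X $ c"] idx_bound)

lemma L_carrier: "z \<cdot>\<^sub>m compB n d A - compA n d A \<in> carrier_mat (n*d) (n*d)"
  by (intro minus_carrier_mat smult_carrier_mat) (auto simp: compA_def compB_def)

lemma delta2: fixes f :: "nat \<Rightarrow> nat \<Rightarrow> 'a::comm_monoid_add"
  shows "(\<Sum>j<d. \<Sum>m<n. if j = i \<and> m = k then f j m else 0) = (if i < d \<and> k < n then f i k else 0)"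
proof -
  have "\<And>j. (\<Sum>m<n. if j = i \<and> m = k then f j m else 0) = (if j = i then (if k < n then f i k else 0) else 0)"
    by (case_tac "j = i") simp_all
  then show ?thesis by simp
qed

lemma rowA:
  assumes X: "X \<in> carrier_vec (n*d)" and LX: "(z \<cdot>\<^sub>m compB n d A - compA n d A) *\<^sub>v X = Y"
    and i: "i < d - 1" and k: "k < n"
  shows "z * X $ (i*n+k) - X $ ((i+1)*n+k) = Y $ (i*n+k)"
proof -
  have "Y $ (i*n+k) = (\<Sum>j<d. \<Sum>m<n. (z * compB n d A $$ (i*n+k, j*n+m) - compA n d A $$ (i*n+k, j*n+m)) * X $ (j*n+m))"
    unfolding LX[symmetric] using i k by (subst mulv_blk[OF L_carrier X], auto simp: L_blk intro!: sum.cong)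
  also have "\<dots> = (\<Sum>j<d. \<Sum>m<n. (if j = i \<and> m = k then z * X $ (j*n+m) else 0) - (if j = i+1 \<and> m = k then X $ (j*n+m) else 0))"
    using i k by (intro sum.cong refl, auto simp: compA_blk compB_blk)
  also have "\<dots> = z * X $ (i*n+k) - X $ ((i+1)*n+k)"
    using i k by (auto simp: sum_subtractf delta2)
  finally show ?thesis by simp
qed

lemma rowB:
  assumes X: "X \<in> carrier_vec (n*d)" and LX: "(z \<cdot>\<^sub>m compB n d A - compA n d A) *\<^sub>v X = Y"
    and d: "d \<ge> 1" and k: "k < n"
  shows "- z * (\<Sum>m<n. A d $$ (k,m) * X $ ((d-1)*n+m)) - (\<Sum>j<d. \<Sum>m<n. A j $$ (k,m) * X $ (j*n+m)) = Y $ ((d-1)*n+k)"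
proof -
  have "Y $ ((d-1)*n+k) = (\<Sum>j<d. \<Sum>m<n. (z * compB n d A $$ ((d-1)*n+k, j*n+m) - compA n d A $$ ((d-1)*n+k, j*n+m)) * X $ (j*n+m))"
    unfolding LX[symmetric] using d k by (subst mulv_blk[OF L_carrier X], auto simp: L_blk intro!: sum.cong)
  also have "\<dots> = (\<Sum>j<d. (if j = d-1 then - z * (\<Sum>m<n. A d $$ (k,m) * X $ ((d-1)*n+m)) else 0) - (\<Sum>m<n. A j $$ (k,m) * X $ (j*n+m)))"
  proof (intro sum.cong refl)
    fix j assume j: "j \<in> {..<d}"
    show "(\<Sum>m<n. (z * compB n d A $$ ((d-1)*n+k, j*n+m) - compA n d A $$ ((d-1)*n+k, j*n+m)) * X $ (j*n+m))
      = (if j = d-1 then - z * (\<Sum>m<n. A d $$ (k,m) * X $ ((d-1)*n+m)) else 0) - (\<Sum>m<n. A j $$ (k,m) * X $ (j*n+m))"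
    proof (cases "j = d-1")
      case True
      have "(\<Sum>m<n. (z * compB n d A $$ ((d-1)*n+k, j*n+m) - compA n d A $$ ((d-1)*n+k, j*n+m)) * X $ (j*n+m))
        = (\<Sum>m<n. - z * (A d $$ (k,m) * X $ ((d-1)*n+m)) - A j $$ (k,m) * X $ (j*n+m))"
        using True j d k by (intro sum.cong refl) (simp add: compA_blk compB_blk ring_distribs)
      then show ?thesis using True by (simp add: sum_subtractf sum_distrib_left)
    next
      case False
      have "(\<Sum>m<n. (z * compB n d A $$ ((d-1)*n+k, j*n+m) - compA n d A $$ ((d-1)*n+k, j*n+m)) * X $ (j*n+m))
        = (\<Sum>m<n. - (A j $$ (k,m) * X $ (j*n+m)))"
        using False j d k by (intro sum.cong refl) (simp add: compA_blk compB_blk ring_distribs)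
      then show ?thesis using False by (simp add: sum_negf)
    qed
  qed
  also have "\<dots> = - z * (\<Sum>m<n. A d $$ (k,m) * X $ ((d-1)*n+m)) - (\<Sum>j<d. \<Sum>m<n. A j $$ (k,m) * X $ (j*n+m))"
    using d by (simp add: sum_subtractf)
  finally show ?thesis by simp
qed


lemma comp_dims[simp]: "dim_row (compA n d A) = n*d" "dim_col (compA n d A) = n*d"
   "dim_row (compB n d A) = n*d" "dim_col (compB n d A) = n*d"
  unfolding compA_def compB_def by simp_all

lemma L_dims[simp]: "dim_row (z \<cdot>\<^sub>m compB n d A - compA n d A) = n*d" "dim_col (z \<cdot>\<^sub>m compB n d A - compA n d A) = n*d"
  using L_carrier[of z n d A] by auto

lemma L_blk_cnj:
  assumes "i < d" "j < d" "k < n" "m < n"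
  shows "cnj ((z \<cdot>\<^sub>m compB n d A - compA n d A) $$ (i*n+m, j*n+k)) =
    (if i < d-1 then (if i = j \<and> m = k then cnj z else 0) - (if j = Suc i \<and> m = k then 1 else 0)
     else (if j = d-1 then - cnj z * cnj (A d $$ (m,k)) else 0) - cnj (A j $$ (m,k)))"
  using assms by (auto simp: L_blk compA_blk compB_blk)

lemma rowT:
  assumes T: "T \<in> carrier_vec (n*d)" and LT: "ctrans (z \<cdot>\<^sub>m compB n d A - compA n d A) *\<^sub>v T = W"
    and d: "d = Suc e" and j: "j < d" and k: "k < n"
  shows "W $ (j*n+k) = (\<Sum>i<e. \<Sum>m<n. (if i = j \<and> m = k then cnj z * T $ (i*n+m) else 0) - (if j = Suc i \<and> m = k then T $ (i*n+m) else 0))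
     + (\<Sum>m<n. ((if j = e then - cnj z * cnj (A d $$ (m,k)) else 0) - cnj (A j $$ (m,k))) * T $ (e*n+m))"
proof -
  let ?L = "z \<cdot>\<^sub>m compB n d A - compA n d A"
  have C: "ctrans ?L \<in> carrier_mat (n*d) (n*d)" using L_carrier ctrans_carrier by blast
  have "W $ (j*n+k) = (\<Sum>i<d. \<Sum>m<n. cnj (?L $$ (i*n+m, j*n+k)) * T $ (i*n+m))"
    unfolding LT[symmetric] using j k
  proof (subst mulv_blk[OF C T], simp_all, intro sum.cong refl)
    fix i m assume i: "i \<in> {..<d}" and m: "m \<in> {..<n}"
    have "i*n+m < n*d" "j*n+k < n*d" using i m j k idx_bound by auto
    then show "ctrans ?L $$ (j*n+k, i*n+m) * T $ (i*n+m) = cnj (?L $$ (i*n+m, j*n+k)) * T $ (i*n+m)"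
      using ctrans_index[of "j*n+k" ?L "i*n+m"] by simp
  qed
  also have "\<dots> = (\<Sum>i<d. \<Sum>m<n. (if i < d-1 then (if i = j \<and> m = k then cnj z else 0) - (if j = Suc i \<and> m = k then 1 else 0)
     else (if j = d-1 then - cnj z * cnj (A d $$ (m,k)) else 0) - cnj (A j $$ (m,k))) * T $ (i*n+m))"
    using j k by (intro sum.cong refl) (simp add: L_blk_cnj)
  also have "\<dots> = (\<Sum>i<e. \<Sum>m<n. (if i = j \<and> m = k then cnj z * T $ (i*n+m) else 0) - (if j = Suc i \<and> m = k then T $ (i*n+m) else 0))
     + (\<Sum>m<n. ((if j = e then - cnj z * cnj (A d $$ (m,k)) else 0) - cnj (A j $$ (m,k))) * T $ (e*n+m))"
    unfolding d sum.lessThan_Suc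
  proof (intro arg_cong2[where f = "(+)"] sum.cong refl)
    fix i m assume "i \<in> {..<e}" "m \<in> {..<n}"
    then show "((if i < Suc e - 1 then (if i = j \<and> m = k then cnj z else 0) - (if j = Suc i \<and> m = k then 1 else 0)
     else (if j = Suc e - 1 then - cnj z * cnj (A (Suc e) $$ (m,k)) else 0) - cnj (A j $$ (m,k))) * T $ (i*n+m))
     = (if i = j \<and> m = k then cnj z * T $ (i*n+m) else 0) - (if j = Suc i \<and> m = k then T $ (i*n+m) else 0)"
      by (simp add: left_diff_distrib)
  next
    fix m assume "m \<in> {..<n}"
    then show "((if e < Suc e - 1 then (if e = j \<and> m = k then cnj z else 0) - (if j = Suc e \<and> m = k then 1 else 0)
     else (if j = Suc e - 1 then - cnj z * cnj (A (Suc e) $$ (m,k)) else 0) - cnj (A j $$ (m,k))) * T $ (e*n+m))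
     = ((if j = e then - cnj z * cnj (A (Suc e) $$ (m,k)) else 0) - cnj (A j $$ (m,k))) * T $ (e*n+m)"
      by simp
  qed
  finally show ?thesis .
qed

lemma delta2S: fixes f :: "nat \<Rightarrow> nat \<Rightarrow> 'a::comm_monoid_add"
  shows "(\<Sum>i<e. \<Sum>m<n. if j = Suc i \<and> m = k then f i m else 0) = (if 0 < j \<and> j-1 < e \<and> k < n then f (j-1) k else 0)"
proof (cases j)
  case 0 then show ?thesis by simp
next
  case (Suc j')
  then have "(\<Sum>i<e. \<Sum>m<n. if j = Suc i \<and> m = k then f i m else 0) = (\<Sum>i<e. \<Sum>m<n. if i = j' \<and> m = k then f i m else 0)"
    by (intro sum.cong refl) auto
  then show ?thesis using Suc by (simp add: delta2)
qed

lemma rowT_sum: fixes T :: "complex vec" and c :: complex shows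
  "(\<Sum>i<e. \<Sum>m<n. (if i = j \<and> m = k then c * T $ (i*n+m) else 0) - (if j = Suc i \<and> m = k then T $ (i*n+m) else 0))
   = (if j < e \<and> k < n then c * T $ (j*n+k) else 0) - (if 0 < j \<and> j-1 < e \<and> k < n then T $ ((j-1)*n+k) else 0)"
  unfolding sum_subtractf delta2 delta2S by (rule refl)

lemma rowT1:
  assumes T: "T \<in> carrier_vec (n*d)" and LT: "ctrans (z \<cdot>\<^sub>m compB n d A - compA n d A) *\<^sub>v T = W"
    and d: "d = Suc e" and j: "j < e" and k: "k < n"
  shows "cnj z * T $ (j*n+k) - (if j > 0 then T $ ((j-1)*n+k) else 0) - (\<Sum>m<n. cnj (A j $$ (m,k)) * T $ (e*n+m)) = W $ (j*n+k)"
  using rowT[OF T LT d _ k, of j] j d k unfolding rowT_sum by (simp add: sum_subtractf sum_negf left_diff_distrib)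

lemma rowT2:
  assumes T: "T \<in> carrier_vec (n*d)" and LT: "ctrans (z \<cdot>\<^sub>m compB n d A - compA n d A) *\<^sub>v T = W"
    and d: "d = Suc e" and k: "k < n"
  shows "- (if e > 0 then T $ ((e-1)*n+k) else 0) - cnj z * (\<Sum>m<n. cnj (A d $$ (m,k)) * T $ (e*n+m))
     - (\<Sum>m<n. cnj (A e $$ (m,k)) * T $ (e*n+m)) = W $ (e*n+k)"
  using rowT[OF T LT d _ k, of e] d k unfolding rowT_sum by (simp add:  sum_subtractf sum_negf left_diff_distrib sum_distrib_left mult.assoc)



lemma part1_scalar:
  fixes x y :: "nat \<Rightarrow> nat \<Rightarrow> complex" and a :: "nat \<Rightarrow> nat \<Rightarrow> nat \<Rightarrow> complex" and z :: complex
  assumes d: "d \<ge> 1"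
    and H1: "\<And>i k. i < d-1 \<Longrightarrow> k < n \<Longrightarrow> z * x i k - x (Suc i) k = y i k"
    and H2: "- z * (\<Sum>m<n. a d k m * x (d-1) m) - (\<Sum>j<d. \<Sum>m<n. a j k m * x j m) = y (d-1) k"
  shows "(\<Sum>m<n. (\<Sum>j\<in>{0..d}. z^j * a j k m) * x 0 m) = - y (d-1) k - (\<Sum>m<n. a d k m * y (d-1) m)
     + (\<Sum>i\<in>{1..d}. \<Sum>m<n. a i k m * (\<Sum>j<i. z^(i-1-j) * y j m))"
proof -
  define s where "s i m = (\<Sum>j<i. z^(i-1-j) * y j m)" for i m
  have sSuc: "s (Suc i) m = z * s i m + y i m" for i m
  proof -
    have "s (Suc i) m = (\<Sum>j<i. z^(i-j) * y j m) + y i m" unfolding s_def by simp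
    also have "(\<Sum>j<i. z^(i-j) * y j m) = z * s i m" unfolding s_def sum_distrib_left
      by (intro sum.cong refl) (simp add: Suc_diff_Suc[symmetric] mult.assoc)
    finally show ?thesis .
  qed
  have xi: "i \<le> d-1 \<Longrightarrow> m < n \<Longrightarrow> x i m = z^i * x 0 m - s i m" for i m
  proof (induction i)
    case 0 then show ?case by (simp add: s_def)
  next
    case (Suc i)
    have "x (Suc i) m = z * x i m - y i m" using H1[of i m] Suc.prems by (simp add: algebra_simps)
    also have "x i m = z^i * x 0 m - s i m" using Suc by simp
    finally show ?case by (simp add: sSuc algebra_simps)
  qed
  obtain e where e: "d = Suc e" using d by (cases d) auto
  have zx: "m < n \<Longrightarrow> z * x (d-1) m = z^d * x 0 m - s d m + y (d-1) m" for m
  proof -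
    assume m: "m < n"
    have xe: "x e m = z^e * x 0 m - s e m" using xi[of e m] e m by simp
    have "z * x (d-1) m = z * (z^e * x 0 m - s e m)" by (simp add: e xe)
    also have "\<dots> = z^d * x 0 m - s d m + y (d-1) m" by (simp add: e sSuc algebra_simps)
    finally show ?thesis .
  qed
  define T where "T = (\<Sum>j\<in>{0..d}. \<Sum>m<n. a j k m * (z^j * x 0 m))"
  define S where "S = (\<Sum>j\<in>{0..d}. \<Sum>m<n. a j k m * s j m)"
  define Q where "Q = (\<Sum>m<n. a d k m * y (d-1) m)"
  have h1: "(\<Sum>j<d. \<Sum>m<n. a j k m * x j m) = (\<Sum>j<d. \<Sum>m<n. a j k m * (z^j * x 0 m)) - (\<Sum>j<d. \<Sum>m<n. a j k m * s j m)"
  proof -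
    have "a j k m * x j m = a j k m * (z^j * x 0 m) - a j k m * s j m" if "j < d" "m < n" for j m
    proof -
      have "x j m = z^j * x 0 m - s j m" by (rule xi) (use that e in auto)
      then show ?thesis by (simp only: right_diff_distrib)
    qed
    then show ?thesis unfolding sum_subtractf[symmetric] by (intro sum.cong refl) auto
  qed
  have h2: "z * (\<Sum>m<n. a d k m * x (d-1) m) = (\<Sum>m<n. a d k m * (z^d * x 0 m)) - (\<Sum>m<n. a d k m * s d m) + Q"
  proof -
    have "z * (a d k m * x (d-1) m) = a d k m * (z^d * x 0 m) - a d k m * s d m + a d k m * y (d-1) m" if "m < n" for m
    proof -
      have "z * (a d k m * x (d-1) m) = a d k m * (z * x (d-1) m)" by (simp add: mult.left_commute)
      also have "\<dots> = a d k m * (z^d * x 0 m - s d m + y (d-1) m)" using zx[OF that] by simp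
      also have "\<dots> = a d k m * (z^d * x 0 m) - a d k m * s d m + a d k m * y (d-1) m" by (simp add: algebra_simps)
      finally show ?thesis .
    qed
    then show ?thesis unfolding Q_def sum_subtractf[symmetric] sum.distrib[symmetric] sum_distrib_left
      by (intro sum.cong refl) auto
  qed
  have T': "T = (\<Sum>j<d. \<Sum>m<n. a j k m * (z^j * x 0 m)) + (\<Sum>m<n. a d k m * (z^d * x 0 m))"
    unfolding T_def by (simp add: e atLeast0AtMost lessThan_Suc_atMost[symmetric])
  have S': "S = (\<Sum>j<d. \<Sum>m<n. a j k m * s j m) + (\<Sum>m<n. a d k m * s d m)"
    unfolding S_def by (simp add: e atLeast0AtMost lessThan_Suc_atMost[symmetric])
  have Y: "y (d-1) k = - T + S - Q"
    using H2 unfolding h1 minus_mult_left[symmetric] h2 T' S' by (simp add: algebra_simps)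
  have L: "(\<Sum>m<n. (\<Sum>j\<in>{0..d}. z^j * a j k m) * x 0 m) = T"
    unfolding T_def sum_distrib_right by (subst sum.swap) (simp add: algebra_simps)
  have S0: "S = (\<Sum>i\<in>{1..d}. \<Sum>m<n. a i k m * s i m)"
  proof -
    have "{0..d} = insert 0 {1..d}" by auto
    then show ?thesis unfolding S_def by (simp add: s_def)
  qed
  show ?thesis unfolding L using Y S0 unfolding Q_def s_def by (simp add: algebra_simps)
qed


lemma part2_scalar:
  fixes t :: "nat \<Rightarrow> nat \<Rightarrow> complex" and w :: "nat \<Rightarrow> complex" and b :: "nat \<Rightarrow> nat \<Rightarrow> complex" and c :: complex
  assumes d: "d \<ge> 1"
    and G1: "\<And>j. j < d-1 \<Longrightarrow> c * t j k - (if j > 0 then t (j-1) k else 0) - (\<Sum>m<n. b j m * t (d-1) m) = w j"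
    and G2: "- (if d \<ge> 2 then t (d-2) k else 0) - c * (\<Sum>m<n. b d m * t (d-1) m) - (\<Sum>m<n. b (d-1) m * t (d-1) m) = w (d-1)"
  shows "(\<Sum>m<n. (\<Sum>j\<in>{0..d}. c^j * b j m) * t (d-1) m) = - (\<Sum>j<d. c^j * w j)"
proof -
  define a where "a j = (\<Sum>m<n. b j m * t (d-1) m)" for j
  define u where "u i = (if i = 0 then 0 else if i-1 < d-1 then t (i-1) k else - a d)" for i
  have wj: "w j = c * u (Suc j) - u j - a j" if "j < d" for j
  proof (cases "j < d-1")
    case True
    then show ?thesis using G1[OF True] unfolding u_def a_def by auto
  next
    case False
    then have j: "j = d-1" using that by simp
    have ud: "u (Suc j) = - a d" using d by (simp add: u_def j)
    have uj: "u j = (if d \<ge> 2 then t (d-2) k else 0)" using d unfolding u_def j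
      by (cases "d = 1") (auto simp: numeral_2_eq_2 Suc_diff_Suc)
    have "w (d-1) = - (if d \<ge> 2 then t (d-2) k else 0) - c * a d - a (d-1)" using G2 by (simp add: a_def)
    then show ?thesis unfolding ud uj by (simp add: j)
  qed
  have "(\<Sum>j<d. c^j * w j) = (\<Sum>j<d. c^(Suc j) * u (Suc j) - c^j * u j) - (\<Sum>j<d. c^j * a j)"
    unfolding sum_subtractf[symmetric] by (intro sum.cong refl) (simp add: wj algebra_simps)
  also have "(\<Sum>j<d. c^(Suc j) * u (Suc j) - c^j * u j) = c^d * u d - c^0 * u 0"
    by (rule sum_lessThan_telescope[where f = "\<lambda>j. c^j * u j"])
  finally have s1: "(\<Sum>j<d. c^j * w j) = c ^ d * u d - c ^ 0 * u 0 - (\<Sum>j<d. c ^ j * a j)" .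
  have "u d = - a d" "u 0 = 0" using d unfolding u_def by auto
  with s1 have "(\<Sum>j<d. c^j * w j) = - (\<Sum>j\<in>{0..d}. c^j * a j)"
    using d by (simp add: atLeast0AtMost lessThan_Suc_atMost[symmetric] del: lessThan_Suc_atMost) 
  moreover have "(\<Sum>m<n. (\<Sum>j\<in>{0..d}. c^j * b j m) * t (d-1) m) = (\<Sum>j\<in>{0..d}. c^j * a j)"
    unfolding a_def sum_distrib_right sum_distrib_left by (subst sum.swap) (simp add: algebra_simps)
  ultimately show ?thesis by simp
qed



theorem theorem2p2:
  fixes n d :: nat and A :: "nat \<Rightarrow> complex mat" and z :: complex
    and Y W :: "complex vec"
  assumes d: "d \<ge> 1"
    and A_dim: "\<And>j. j \<le> d \<Longrightarrow> A j \<in> carrier_mat n n"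
    and Ad: "A d \<noteq> 0\<^sub>m n n"
    and Pinv: "invertible_mat (matpoly n d A z)"
    and Y: "Y \<in> carrier_vec (n*d)"
    and W: "W \<in> carrier_vec (n*d)"
  shows
    "(let X = minv (z \<cdot>\<^sub>m compB n d A - compA n d A) *\<^sub>v Y in
       blk n X 0 = minv (matpoly n d A z) *\<^sub>v
          (- blk n Y (d-1) - A d *\<^sub>v blk n Y (d-1)
           + finsum_vec TYPE(complex) n
               (\<lambda>i. A i *\<^sub>v finsum_vec TYPE(complex) n
                       (\<lambda>j. z ^ (i - 1 - j) \<cdot>\<^sub>v blk n Y j) {0..<i}) {1..d})
     \<and> (\<forall>i\<in>{1..<d}. blk n X i = z \<cdot>\<^sub>v blk n X (i-1) - blk n Y (i-1)))
   \<and> (let Xt = minv (ctrans (z \<cdot>\<^sub>m compB n d A - compA n d A)) *\<^sub>v W in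
       blk n Xt (d-1) = - (minv (ctrans (matpoly n d A z)) *\<^sub>v
          finsum_vec TYPE(complex) n (\<lambda>j. (cnj z) ^ j \<cdot>\<^sub>v blk n W j) {0..<d})
     \<and> (d \<ge> 2 \<longrightarrow> blk n Xt (d-2) = - blk n W (d-1)
          - cnj z \<cdot>\<^sub>v (ctrans (A d) *\<^sub>v blk n Xt (d-1))
          - ctrans (A (d-1)) *\<^sub>v blk n Xt (d-1))
     \<and> (\<forall>i. i + 3 \<le> d \<longrightarrow> blk n Xt i = - blk n W (i+1)
          + cnj z \<cdot>\<^sub>v blk n Xt (i+1) - ctrans (A (i+1)) *\<^sub>v blk n Xt (d-1)))"
proof -
  have blk_carrier: "blk n u i \<in> carrier_vec n" for u i unfolding blk_def by simp
  have blk_index: "k < n \<Longrightarrow> blk n u i $ k = u $ (i*n+k)" for u i k unfolding blk_def by simp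
  have blk_dim[simp]: "dim_vec (blk n u i) = n" for u i unfolding blk_def by simp
  let ?L = "z \<cdot>\<^sub>m compB n d A - compA n d A"
  let ?P = "matpoly n d A z"
  have Lc: "?L \<in> carrier_mat (n*d) (n*d)" by (rule L_carrier)
  have Pc: "?P \<in> carrier_mat n n" unfolding matpoly_def by simp
  have PU: "?P \<in> Units (ring_mat TYPE(complex) n ())" by (rule invertible_units[OF Pc Pinv])
  obtain e where e: "d = Suc e" using d by (cases d) auto
  have Pk: "?P $$ (k,m) = (\<Sum>j\<in>{0..d}. z^j * A j $$ (k,m))" if "k < n" "m < n" for k m
    using that unfolding matpoly_def by simp
  have Pmul: "(?P *\<^sub>v v) $ k = (\<Sum>m<n. (\<Sum>j\<in>{0..d}. z^j * A j $$ (k,m)) * v $ m)"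
    if "k < n" "v \<in> carrier_vec n" for k v
    using that Pc by (auto simp: mult_mat_vec_def scalar_prod_def Pk lessThan_atLeast0 intro!: sum.cong)
  have core1: "(\<Sum>m<n. (\<Sum>j\<in>{0..d}. z^j * A j $$ (k,m)) * X $ (0*n+m)) = - Y' $ ((d-1)*n+k)
     - (\<Sum>m<n. A d $$ (k,m) * Y' $ ((d-1)*n+m))
     + (\<Sum>i\<in>{1..d}. \<Sum>m<n. A i $$ (k,m) * (\<Sum>j<i. z^(i-1-j) * Y' $ (j*n+m)))"
    if X: "X \<in> carrier_vec (n*d)" and LX: "?L *\<^sub>v X = Y'" and k: "k < n" for X Y' k
  proof (rule part1_scalar[where x = "\<lambda>i m. X $ (i*n+m)" and y = "\<lambda>i m. Y' $ (i*n+m)"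
        and a = "\<lambda>j k m. A j $$ (k,m)"])
    show "1 \<le> d" by (rule d)
    show "z * X $ (i*n+k') - X $ (Suc i*n+k') = Y' $ (i*n+k')" if "i < d-1" "k' < n" for i k'
      using rowA[OF X LX that] by simp
    show "- z * (\<Sum>m<n. A d $$ (k,m) * X $ ((d-1)*n+m)) - (\<Sum>j<d. \<Sum>m<n. A j $$ (k,m) * X $ (j*n+m)) = Y' $ ((d-1)*n+k)"
      by (rule rowB[OF X LX d k])
  qed
  have zidx: "(0\<^sub>v (n*d) :: complex vec) $ (j*n+m) = 0" if "j < d" "m < n" for j m
    using idx_bound[OF that] by simp
  have inj: "v = 0\<^sub>v (n*d)" if v: "v \<in> carrier_vec (n*d)" and Lv: "?L *\<^sub>v v = 0\<^sub>v (n*d)" for v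
  proof -
    have P0: "?P *\<^sub>v blk n v 0 = 0\<^sub>v n"
    proof (intro eq_vecI)
      fix k assume k: "k < dim_vec (0\<^sub>v n :: complex vec)"
      then have k: "k < n" by simp
      have "(?P *\<^sub>v blk n v 0) $ k = (\<Sum>m<n. (\<Sum>j\<in>{0..d}. z^j * A j $$ (k,m)) * blk n v 0 $ m)"
        by (rule Pmul[OF k blk_carrier])
      also have "\<dots> = (\<Sum>m<n. (\<Sum>j\<in>{0..d}. z^j * A j $$ (k,m)) * v $ (0*n+m))"
        by (intro sum.cong refl) (simp add: blk_index)
      also have "\<dots> = 0"
      proof -
        have a: "(0\<^sub>v (n*d) :: complex vec) $ ((d-1)*n+k) = 0" using zidx d k by simp
        have b: "(\<Sum>m<n. A d $$ (k,m) * (0\<^sub>v (n*d) :: complex vec) $ ((d-1)*n+m)) = 0"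
          using zidx d by (intro sum.neutral) auto
        have c: "(\<Sum>i\<in>{1..d}. \<Sum>m<n. A i $$ (k,m) * (\<Sum>j<i. z^(i-1-j) * (0\<^sub>v (n*d) :: complex vec) $ (j*n+m))) = 0"
          using zidx by (intro sum.neutral ballI) auto
        show ?thesis unfolding core1[OF v Lv k] a b c by simp
      qed
      finally show "(?P *\<^sub>v blk n v 0) $ k = 0\<^sub>v n $ k" using k by simp
    qed (use Pc in auto)
    have mz: "minv ?P *\<^sub>v 0\<^sub>v n = 0\<^sub>v n"
      using minv_facts(3)[OF Pc PU] by (intro eq_vecI) (auto simp: mult_mat_vec_def)
    have b0: "blk n v 0 = 0\<^sub>v n"
      using solve_uniq[OF Pc PU blk_carrier P0] mz by simp
    have vi: "i < d \<Longrightarrow> m < n \<Longrightarrow> v $ (i*n+m) = 0" for i m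
    proof (induction i arbitrary: m)
      case 0 then show ?case using arg_cong[OF b0, of "\<lambda>u. u $ m"] by (simp add: blk_def)
    next
      case (Suc i)
      have "z * v $ (i*n+m) - v $ ((i+1)*n+m) = (0\<^sub>v (n*d) :: complex vec) $ (i*n+m)"
        by (rule rowA[OF v Lv _ Suc.prems(2)]) (use Suc.prems in simp)
      then show ?case using Suc zidx[of i m] by simp
    qed
    show ?thesis
    proof (intro eq_vecI)
      fix r assume "r < dim_vec (0\<^sub>v (n*d) :: complex vec)"
      then have r: "r < n*d" by simp
      then have np: "n > 0" by (cases n) auto
      have "r div n < d" using r by (metis less_mult_imp_div_less mult.commute)
      moreover have "r mod n < n" using np by simp
      ultimately have "v $ ((r div n)*n + r mod n) = 0" by (rule vi)
      then show "v $ r = 0\<^sub>v (n*d) $ r" using r by simp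
    qed (use v in simp)
  qed
  have LU: "?L \<in> Units (ring_mat TYPE(complex) (n*d) ())" by (rule inj_units[OF Lc inj])
  have Amul: "(A j *\<^sub>v v) $ k = (\<Sum>m<n. A j $$ (k,m) * v $ m)" if "j \<le> d" "v \<in> carrier_vec n" "k < n" for j v k
    using that A_dim[OF that(1)] by (auto simp: mult_mat_vec_def scalar_prod_def lessThan_atLeast0 intro!: sum.cong)
  have Ac: "A j *\<^sub>v v \<in> carrier_vec n" if "j \<le> d" for j v
    using A_dim[OF that] unfolding carrier_vec_def mult_mat_vec_def by auto
  define X where "X = minv ?L *\<^sub>v Y"
  have LX: "?L *\<^sub>v X = Y" and Xc: "X \<in> carrier_vec (n*d)" using solve_eq[OF Lc LU Y] X_def by auto
  define inner where "inner i = finsum_vec TYPE(complex) n (\<lambda>j. z ^ (i - 1 - j) \<cdot>\<^sub>v blk n Y j) {0..<i}" for i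
  have inner_c: "inner i \<in> carrier_vec n" for i
    unfolding inner_def by (rule finsum_vec_closed) (auto simp: blk_carrier)
  have inner_idx: "inner i $ m = (\<Sum>j<i. z^(i-1-j) * Y $ (j*n+m))" if "m < n" for i m
    unfolding inner_def using that
    by (subst index_finsum_vec) (auto simp: blk_index blk_carrier lessThan_atLeast0 intro!: sum.cong)
  define outer where "outer = finsum_vec TYPE(complex) n (\<lambda>i. A i *\<^sub>v inner i) {1..d}"
  have outer_c: "outer \<in> carrier_vec n"
    unfolding outer_def by (rule finsum_vec_closed) (auto intro: Ac)
  have outer_idx: "outer $ k = (\<Sum>i\<in>{1..d}. \<Sum>m<n. A i $$ (k,m) * (\<Sum>j<i. z^(i-1-j) * Y $ (j*n+m)))" if "k < n" for k
    unfolding outer_def using that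
    by (subst index_finsum_vec) (auto intro: Ac simp: Amul inner_c inner_idx intro!: sum.cong)
  define RHS where "RHS = - blk n Y (d-1) - A d *\<^sub>v blk n Y (d-1) + outer"
  have RHS_c: "RHS \<in> carrier_vec n" unfolding RHS_def using outer_c Ac[of d] blk_carrier by auto
  have RHS_idx: "RHS $ k = - Y $ ((d-1)*n+k) - (\<Sum>m<n. A d $$ (k,m) * Y $ ((d-1)*n+m))
     + (\<Sum>i\<in>{1..d}. \<Sum>m<n. A i $$ (k,m) * (\<Sum>j<i. z^(i-1-j) * Y $ (j*n+m)))" if "k < n" for k
  proof -
    have "(A d *\<^sub>v blk n Y (d-1)) $ k = (\<Sum>m<n. A d $$ (k,m) * Y $ ((d-1)*n+m))"
      using that by (simp add: Amul blk_carrier blk_index)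
    then show ?thesis unfolding RHS_def using that outer_c Ac[of d] blk_carrier
      using A_dim[of d] by (simp add: outer_idx blk_index)
  qed
  have PX0: "?P *\<^sub>v blk n X 0 = RHS"
  proof (intro eq_vecI)
    fix k assume "k < dim_vec RHS"
    then have k: "k < n" using RHS_c by simp
    have "(?P *\<^sub>v blk n X 0) $ k = (\<Sum>m<n. (\<Sum>j\<in>{0..d}. z^j * A j $$ (k,m)) * blk n X 0 $ m)"
      by (rule Pmul[OF k blk_carrier])
    also have "\<dots> = (\<Sum>m<n. (\<Sum>j\<in>{0..d}. z^j * A j $$ (k,m)) * X $ (0*n+m))"
      by (intro sum.cong refl) (simp add: blk_index)
    also have "\<dots> = RHS $ k" unfolding core1[OF Xc LX k] RHS_idx[OF k] ..
    finally show "(?P *\<^sub>v blk n X 0) $ k = RHS $ k" .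
  qed (use Pc RHS_c in auto)
  have part1a: "blk n X 0 = minv ?P *\<^sub>v RHS" by (rule solve_uniq[OF Pc PU blk_carrier PX0])
  have part1b: "blk n X i = z \<cdot>\<^sub>v blk n X (i-1) - blk n Y (i-1)" if i: "i \<in> {1..<d}" for i
  proof (intro eq_vecI)
    fix k assume "k < dim_vec (z \<cdot>\<^sub>v blk n X (i-1) - blk n Y (i-1))"
    then have k: "k < n" by (simp add: blk_def)
    have "z * X $ ((i-1)*n+k) - X $ ((i-1+1)*n+k) = Y $ ((i-1)*n+k)"
      by (rule rowA[OF Xc LX _ k]) (use i in auto)
    moreover have "i-1+1 = i" using i by auto
    ultimately show "blk n X i $ k = (z \<cdot>\<^sub>v blk n X (i-1) - blk n Y (i-1)) $ k"
      using k by (simp add: blk_def algebra_simps)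
  qed (simp add: blk_def)
  have part1: "(let X = minv (z \<cdot>\<^sub>m compB n d A - compA n d A) *\<^sub>v Y in
       blk n X 0 = minv (matpoly n d A z) *\<^sub>v
          (- blk n Y (d-1) - A d *\<^sub>v blk n Y (d-1)
           + finsum_vec TYPE(complex) n
               (\<lambda>i. A i *\<^sub>v finsum_vec TYPE(complex) n
                       (\<lambda>j. z ^ (i - 1 - j) \<cdot>\<^sub>v blk n Y j) {0..<i}) {1..d})
     \<and> (\<forall>i\<in>{1..<d}. blk n X i = z \<cdot>\<^sub>v blk n X (i-1) - blk n Y (i-1)))"
    using part1a part1b unfolding Let_def X_def[symmetric] RHS_def outer_def inner_def by blast
  have Lt_c: "ctrans ?L \<in> carrier_mat (n*d) (n*d)" by (rule ctrans_carrier[OF Lc])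
  have LtU: "ctrans ?L \<in> Units (ring_mat TYPE(complex) (n*d) ())" by (rule ctrans_units[OF Lc LU])
  have Pt_c: "ctrans ?P \<in> carrier_mat n n" by (rule ctrans_carrier[OF Pc])
  have PtU: "ctrans ?P \<in> Units (ring_mat TYPE(complex) n ())" by (rule ctrans_units[OF Pc PU])
  define Xt where "Xt = minv (ctrans ?L) *\<^sub>v W"
  have LT: "ctrans ?L *\<^sub>v Xt = W" and Xtc: "Xt \<in> carrier_vec (n*d)" using solve_eq[OF Lt_c LtU W] Xt_def by auto
  have e1: "d - 1 = e" using e by simp
  define F where "F = finsum_vec TYPE(complex) n (\<lambda>j. (cnj z) ^ j \<cdot>\<^sub>v blk n W j) {0..<d}"
  have F_c: "F \<in> carrier_vec n"
    unfolding F_def by (rule finsum_vec_closed) (auto simp: blk_carrier)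
  have F_idx: "F $ k = (\<Sum>j<d. cnj z ^ j * W $ (j*n+k))" if "k < n" for k
    unfolding F_def using that
    by (subst index_finsum_vec) (auto simp: blk_index blk_carrier lessThan_atLeast0 intro!: sum.cong)
  have Ptmul: "(ctrans ?P *\<^sub>v v) $ k = (\<Sum>m<n. (\<Sum>j\<in>{0..d}. cnj z ^ j * cnj (A j $$ (m,k))) * v $ m)"
    if k: "k < n" and v: "v \<in> carrier_vec n" for k v
  proof -
    have "(ctrans ?P *\<^sub>v v) $ k = (\<Sum>m<n. ctrans ?P $$ (k,m) * v $ m)"
      using k v Pt_c Pc by (auto simp: mult_mat_vec_def scalar_prod_def lessThan_atLeast0 intro!: sum.cong)
    also have "\<dots> = (\<Sum>m<n. (\<Sum>j\<in>{0..d}. cnj z ^ j * cnj (A j $$ (m,k))) * v $ m)"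
      using k Pc by (intro sum.cong refl) (auto simp: ctrans_index Pk)
    finally show ?thesis .
  qed
  have Atmul: "(ctrans (A j) *\<^sub>v v) $ k = (\<Sum>m<n. cnj (A j $$ (m,k)) * v $ m)"
    if j: "j \<le> d" and k: "k < n" and v: "v \<in> carrier_vec n" for j k v
    using A_dim[OF j] k v by (auto simp: mult_mat_vec_def scalar_prod_def lessThan_atLeast0 ctrans_index intro!: sum.cong)
  have Atc: "ctrans (A j) *\<^sub>v v \<in> carrier_vec n" if j: "j \<le> d" for j v
    using A_dim[OF j] unfolding carrier_vec_def mult_mat_vec_def by auto
  have PtX: "ctrans ?P *\<^sub>v blk n Xt (d-1) = - F"
  proof (intro eq_vecI)
    fix k assume "k < dim_vec (- F)"
    then have k: "k < n" using F_c by simp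
    have "(ctrans ?P *\<^sub>v blk n Xt (d-1)) $ k = (\<Sum>m<n. (\<Sum>j\<in>{0..d}. cnj z ^ j * cnj (A j $$ (m,k))) * blk n Xt (d-1) $ m)"
      by (rule Ptmul[OF k blk_carrier])
    also have "\<dots> = (\<Sum>m<n. (\<Sum>j\<in>{0..d}. cnj z ^ j * cnj (A j $$ (m,k))) * Xt $ ((d-1)*n+m))"
      by (intro sum.cong refl) (simp add: blk_index)
    also have "\<dots> = - (\<Sum>j<d. cnj z ^ j * W $ (j*n+k))"
    proof (rule part2_scalar[where t = "\<lambda>i m. Xt $ (i*n+m)" and w = "\<lambda>j. W $ (j*n+k)"
        and b = "\<lambda>j m. cnj (A j $$ (m,k))" and c = "cnj z" and k = k])
      show "1 \<le> d" by (rule d)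
      show "cnj z * Xt $ (j*n+k) - (if j > 0 then Xt $ ((j-1)*n+k) else 0) - (\<Sum>m<n. cnj (A j $$ (m,k)) * Xt $ ((d-1)*n+m)) = W $ (j*n+k)"
        if "j < d-1" for j
        using rowT1[OF Xtc LT e _ k, of j] that e1 by simp
      show "- (if d \<ge> 2 then Xt $ ((d-2)*n+k) else 0) - cnj z * (\<Sum>m<n. cnj (A d $$ (m,k)) * Xt $ ((d-1)*n+m))
         - (\<Sum>m<n. cnj (A (d-1) $$ (m,k)) * Xt $ ((d-1)*n+m)) = W $ ((d-1)*n+k)"
        using rowT2[OF Xtc LT e k] e by (cases e) (simp_all add: numeral_2_eq_2)
    qed
    also have "\<dots> = (- F) $ k" using F_c k by (simp add: F_idx)
    finally show "(ctrans ?P *\<^sub>v blk n Xt (d-1)) $ k = (- F) $ k" .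
  qed (use Pt_c F_c in auto)
  have part2a: "blk n Xt (d-1) = - (minv (ctrans ?P) *\<^sub>v F)"
    using solve_uniq[OF Pt_c PtU blk_carrier PtX] mult_mat_vec_neg[OF minv_facts(3)[OF Pt_c PtU] F_c] by simp
  have part2b: "blk n Xt (d-2) = - blk n W (d-1)
          - cnj z \<cdot>\<^sub>v (ctrans (A d) *\<^sub>v blk n Xt (d-1))
          - ctrans (A (d-1)) *\<^sub>v blk n Xt (d-1)" if d2: "d \<ge> 2"
  proof (intro eq_vecI)
    fix k assume "k < dim_vec (- blk n W (d-1) - cnj z \<cdot>\<^sub>v (ctrans (A d) *\<^sub>v blk n Xt (d-1)) - ctrans (A (d-1)) *\<^sub>v blk n Xt (d-1))"
    then have k: "k < n" using A_dim[of "d-1"] by simp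
    have r: "- Xt $ ((d-2)*n+k) - cnj z * (\<Sum>m<n. cnj (A d $$ (m,k)) * Xt $ ((d-1)*n+m))
         - (\<Sum>m<n. cnj (A (d-1) $$ (m,k)) * Xt $ ((d-1)*n+m)) = W $ ((d-1)*n+k)"
      using rowT2[OF Xtc LT e k] e d2 by (simp add: numeral_2_eq_2)
    have a1: "(ctrans (A d) *\<^sub>v blk n Xt (d-1)) $ k = (\<Sum>m<n. cnj (A d $$ (m,k)) * Xt $ ((d-1)*n+m))"
      using Atmul[OF _ k blk_carrier, of d] by (simp add: blk_index)
    have a2: "(ctrans (A (d-1)) *\<^sub>v blk n Xt (d-1)) $ k = (\<Sum>m<n. cnj (A (d-1) $$ (m,k)) * Xt $ ((d-1)*n+m))"
      using Atmul[OF _ k blk_carrier, of "d-1"] by (simp add: blk_index)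
    have dims: "dim_vec (ctrans (A d) *\<^sub>v blk n Xt (d-1)) = n" "dim_vec (ctrans (A (d-1)) *\<^sub>v blk n Xt (d-1)) = n"
      using A_dim[of d] A_dim[of "d-1"] by auto
    have "(- blk n W (d-1) - cnj z \<cdot>\<^sub>v (ctrans (A d) *\<^sub>v blk n Xt (d-1)) - ctrans (A (d-1)) *\<^sub>v blk n Xt (d-1)) $ k
      = - W $ ((d-1)*n+k) - cnj z * (ctrans (A d) *\<^sub>v blk n Xt (d-1)) $ k - (ctrans (A (d-1)) *\<^sub>v blk n Xt (d-1)) $ k"
      using k dims by (simp add: blk_index del: index_mult_mat_vec)
    also have "\<dots> = Xt $ ((d-2)*n+k)" unfolding a1 a2 r[symmetric] by (simp add: algebra_simps)
    finally show "blk n Xt (d-2) $ k = (- blk n W (d-1) - cnj z \<cdot>\<^sub>v (ctrans (A d) *\<^sub>v blk n Xt (d-1)) - ctrans (A (d-1)) *\<^sub>v blk n Xt (d-1)) $ k"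
      using k by (simp add: blk_index)
  qed (use A_dim[of "d-1"] in auto)
  have part2c: "blk n Xt i = - blk n W (i+1)
          + cnj z \<cdot>\<^sub>v blk n Xt (i+1) - ctrans (A (i+1)) *\<^sub>v blk n Xt (d-1)" if i3: "i + 3 \<le> d" for i
  proof (intro eq_vecI)
    fix k assume "k < dim_vec (- blk n W (i+1) + cnj z \<cdot>\<^sub>v blk n Xt (i+1) - ctrans (A (i+1)) *\<^sub>v blk n Xt (d-1))"
    then have k: "k < n" using A_dim[of "i+1"] i3 by simp
    have r: "cnj z * Xt $ ((i+1)*n+k) - Xt $ (i*n+k) - (\<Sum>m<n. cnj (A (i+1) $$ (m,k)) * Xt $ ((d-1)*n+m)) = W $ ((i+1)*n+k)"
      using rowT1[OF Xtc LT e _ k, of "i+1"] e i3 by simp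
    have a1: "(ctrans (A (i+1)) *\<^sub>v blk n Xt (d-1)) $ k = (\<Sum>m<n. cnj (A (i+1) $$ (m,k)) * Xt $ ((d-1)*n+m))"
      using Atmul[OF _ k blk_carrier, of "i+1"] i3 by (simp add: blk_index)
    have dims: "dim_vec (ctrans (A (i+1)) *\<^sub>v blk n Xt (d-1)) = n"
      using A_dim[of "i+1"] i3 by auto
    have "(- blk n W (i+1) + cnj z \<cdot>\<^sub>v blk n Xt (i+1) - ctrans (A (i+1)) *\<^sub>v blk n Xt (d-1)) $ k
      = - W $ ((i+1)*n+k) + cnj z * Xt $ ((i+1)*n+k) - (ctrans (A (i+1)) *\<^sub>v blk n Xt (d-1)) $ k"
      using k dims by (simp add: blk_index del: index_mult_mat_vec)
    also have "\<dots> = Xt $ (i*n+k)" unfolding a1 r[symmetric] by (simp add: algebra_simps)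
    finally show "blk n Xt i $ k = (- blk n W (i+1) + cnj z \<cdot>\<^sub>v blk n Xt (i+1) - ctrans (A (i+1)) *\<^sub>v blk n Xt (d-1)) $ k"
      using k by (simp add: blk_index)
  qed (use A_dim[of "i+1"] i3 in auto)
  have part2: "(let Xt = minv (ctrans (z \<cdot>\<^sub>m compB n d A - compA n d A)) *\<^sub>v W in
       blk n Xt (d-1) = - (minv (ctrans (matpoly n d A z)) *\<^sub>v
          finsum_vec TYPE(complex) n (\<lambda>j. (cnj z) ^ j \<cdot>\<^sub>v blk n W j) {0..<d})
     \<and> (d \<ge> 2 \<longrightarrow> blk n Xt (d-2) = - blk n W (d-1)
          - cnj z \<cdot>\<^sub>v (ctrans (A d) *\<^sub>v blk n Xt (d-1))
          - ctrans (A (d-1)) *\<^sub>v blk n Xt (d-1))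
     \<and> (\<forall>i. i + 3 \<le> d \<longrightarrow> blk n Xt i = - blk n W (i+1)
          + cnj z \<cdot>\<^sub>v blk n Xt (i+1) - ctrans (A (i+1)) *\<^sub>v blk n Xt (d-1)))"
    using part2a part2b part2c unfolding Let_def Xt_def[symmetric] F_def by blast
  show ?thesis using part1 part2 by blast
qed

end
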